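(* Let $\gamma\ge0$ be an integer and let $\xi=\{\xi^m\}_{m\ge0}$ be given by $\xi^m=K_\gamma\mathbf{1}(m=\gamma)$ with $K_\gamma=\pm2\omega_\gamma\sqrt{\frac{2}{3C_{\gamma\gamma\gamma\gamma}}}$. Then $\mathcal{M}(\xi)=0$.
   Context: $\omega_n=n+1$, $C_{ijkm}=\frac2\pi\int_{-1}^1U_iU_jU_kU_m\sqrt{1-y^2}\,dy$ ($U_n$ Chebyshev polynomials of the second kind). $(A\xi)^m=\omega_m^2\xi^m$; $(f(u))^m=-\sum_{i,j,k\ge0}C_{ijkm}u^iu^ju^k$; $\Phi^t(\xi)=\{\xi^n\cos(\omega_nt)\}_n$; $\langle f\rangle(\xi)=\frac1{2\pi}\int_0^{2\pi}\Phi^t[f(\Phi^t(\xi))]dt$; and $\mathcal{M}(\xi)=A\xi+\langle f\rangle(\xi)$. *)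

theory Defs
  imports "HOL-Analysis.Analysis"
begin

definition omega :: "nat \<Rightarrow> real" where
  "omega n = real n + 1"

fun chebU :: "nat \<Rightarrow> real \<Rightarrow> real" where
  "chebU 0 y = 1"
| "chebU (Suc 0) y = 2 * y"
| "chebU (Suc (Suc n)) y = 2 * y * chebU (Suc n) y - chebU n y"

definition Ccoef :: "nat \<Rightarrow> nat \<Rightarrow> nat \<Rightarrow> nat \<Rightarrow> real" where
  "Ccoef i j k m = 2 / pi * integral {-1..1}
     (\<lambda>y. chebU i y * chebU j y * chebU k y * chebU m y * sqrt (1 - y\<^sup>2))"

definition Aop :: "(nat \<Rightarrow> real) \<Rightarrow> (nat \<Rightarrow> real)" where
  "Aop xi = (\<lambda>m. (omega m)\<^sup>2 * xi m)"

definition fnl :: "(nat \<Rightarrow> real) \<Rightarrow> (nat \<Rightarrow> real)" where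
  "fnl u = (\<lambda>m. - (\<Sum>\<^sub>\<infinity>(i, j, k)\<in>UNIV. Ccoef i j k m * u i * u j * u k))"

definition Phi :: "real \<Rightarrow> (nat \<Rightarrow> real) \<Rightarrow> (nat \<Rightarrow> real)" where
  "Phi t xi = (\<lambda>n. xi n * cos (omega n * t))"

definition favg :: "(nat \<Rightarrow> real) \<Rightarrow> (nat \<Rightarrow> real)" where
  "favg xi = (\<lambda>m. 1 / (2 * pi) * integral {0..2 * pi} (\<lambda>t. Phi t (fnl (Phi t xi)) m))"

definition Mop :: "(nat \<Rightarrow> real) \<Rightarrow> (nat \<Rightarrow> real)" where
  "Mop xi = (\<lambda>m. Aop xi m + favg xi m)"

end

theory Submission
  imports Defs "HOL-Computational_Algebra.Polynomial"
begin

lemma ind2[case_names 1 2 3]: "P 0 \<Longrightarrow> P (Suc 0) \<Longrightarrow> (\<And>n. P n \<Longrightarrow> P (Suc n) \<Longrightarrow> P (Suc (Suc n))) \<Longrightarrow> P n"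
  by (rule chebU.induct[of "\<lambda>n _. P n" n 0]) auto

lemma sin_aux: "2 * cos (t::real) * sin a - sin (a - t) = sin (a + t)"
  by (simp add: sin_add sin_diff algebra_simps)

lemma cheb_sin: "chebU n (cos t) * sin t = sin ((real n + 1) * t)"
proof (induction n rule: ind2)
  case 1 then show ?case by simp
next
  case 2 then show ?case using sin_double[of t] by (simp add: algebra_simps)
next
  case (3 n)
  have e1: "sin ((real (Suc (Suc n)) + 1) * t) = sin ((real n + 2) * t + t)" by (simp add: algebra_simps)
  have e2: "sin ((real n + 1) * t) = sin ((real n + 2) * t - t)" by (simp add: algebra_simps)
  have "chebU (Suc (Suc n)) (cos t) * sin t = 2 * cos t * (chebU (Suc n) (cos t) * sin t) - chebU n (cos t) * sin t"
    by (simp add: algebra_simps)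
  also have "\<dots> = 2 * cos t * sin ((real n + 2) * t) - sin ((real n + 1) * t)"
    using 3 by (simp add: algebra_simps)
  also have "\<dots> = sin ((real (Suc (Suc n)) + 1) * t)"
    unfolding e1 e2 using sin_aux[of t "(real n + 2) * t"] by simp
  finally show ?case .
qed

lemma cheb_neg: "chebU n (- y) = (-1) ^ n * chebU n y"
  by (induction n rule: ind2) (auto simp: algebra_simps)

lemma cheb_cont: "continuous_on S (chebU n)"
  by (induction n rule: ind2) (auto intro!: continuous_intros)

lemma cheb_poly: "\<exists>p. degree p \<le> n \<and> (\<forall>y. chebU n y = poly p y)"
proof (induction n rule: ind2)
  case 1 show ?case by (rule exI[of _ "[:1:]"]) simp
next
  case 2 show ?case by (rule exI[of _ "[:0,2:]"]) simp
next
  case (3 n)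
  obtain p where p: "degree p \<le> Suc n" "\<forall>y. chebU (Suc n) y = poly p y" using 3(2) by blast
  obtain q where q: "degree q \<le> n" "\<forall>y. chebU n y = poly q y" using 3(1) by blast
  have "degree ([:0,2:] * p - q) \<le> Suc (Suc n)"
  proof -
    have "degree ([:0,2:] * p) \<le> Suc (Suc n)"
      using degree_mult_le[of "[:0,2:]" p] p(1) by simp
    then show ?thesis using degree_diff_le q(1) by (meson le_SucI le_trans)
  qed
  then show ?case using p q by (intro exI[of _ "[:0,2:] * p - q"]) auto
qed

lemma int_cos: assumes "c \<in> \<int>"
  shows "((\<lambda>t. cos (c * t)) has_integral (if c = 0 then 2 * pi else 0)) {0..2*pi}"
proof (cases "c = 0")
  case True then show ?thesis using has_integral_const_real[of "1::real" 0 "2*pi"] by (simp add: pi_gt_zero less_imp_le)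
next
  case False
  have "((\<lambda>t. cos (c * t)) has_integral (sin (c * (2*pi)) / c - sin (c * 0) / c)) {0..2*pi}"
    apply (rule fundamental_theorem_of_calculus)
     apply simp
    apply (rule has_real_derivative_iff_has_vector_derivative[where f="\<lambda>t. sin (c*t) / c", THEN iffD1])
    using False by (auto intro!: derivative_eq_intros)
  moreover have "sin (c * (2*pi)) = 0" using sin_integer_2pi[OF assms] by (simp add: mult.commute mult.left_commute)
  ultimately show ?thesis using False by simp
qed

lemma int_sinsin: assumes "m \<ge> 1"
  shows "((\<lambda>t. sin ((real m + 1) * t) * sin t) has_integral 0) {0..pi}"
proof -
  let ?F = "\<lambda>t. sin (real m * t) / (2 * real m) - sin ((real m + 2) * t) / (2 * (real m + 2))"
  have d: "(?F has_real_derivative sin ((real m + 1) * t) * sin t) (at t within {0..pi})" for t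
  proof -
    have e: "cos (real m * t) - cos ((real m + 2) * t) = 2 * (sin ((real m + 1) * t) * sin t)"
    proof -
      have "cos (real m * t) = cos ((real m + 1) * t - t)" by (simp add: algebra_simps)
      moreover have "cos ((real m + 2) * t) = cos ((real m + 1) * t + t)" by (simp add: algebra_simps)
      ultimately show ?thesis by (simp add: cos_add cos_diff)
    qed
    have D: "(?F has_real_derivative (cos (real m * t) * real m / (2 * real m) - cos ((real m + 2) * t) * (real m + 2) / (2 * (real m + 2)))) (at t within {0..pi})"
      by (auto intro!: derivative_eq_intros)
    have a: "x * c / (2 * c) = x / 2" if "c \<noteq> 0" for x c :: real using that by simp
    have h1: "real m \<noteq> 0" and h2: "real m + 2 \<noteq> 0" using assms by auto
    have E: "cos (real m * t) * real m / (2 * real m) - cos ((real m + 2) * t) * (real m + 2) / (2 * (real m + 2))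
        = sin ((real m + 1) * t) * sin t"
      by (simp only: a[OF h1] a[OF h2] diff_divide_distrib[symmetric] e)
    show ?thesis using D unfolding E .
  qed
  have "((\<lambda>t. sin ((real m + 1) * t) * sin t) has_integral (?F pi - ?F 0)) {0..pi}"
  proof (rule fundamental_theorem_of_calculus)
    fix x assume "x \<in> {0..pi}"
    show "(?F has_vector_derivative sin ((real m + 1) * x) * sin x) (at x within {0..pi})"
      using d[of x] unfolding has_real_derivative_iff_has_vector_derivative .
  qed simp
  moreover have "sin ((real m + 2) * pi) = 0" using sin_npi[of "m+2"] by (simp add: add.commute)
  moreover have "sin (real m * pi) = 0" by simp
  ultimately show ?thesis by simp
qed

lemma cheb_base: assumes "m \<ge> 1"
  shows "integral {-1..1} (\<lambda>y. chebU m y * sqrt (1 - y\<^sup>2)) = 0"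
proof -
  let ?f = "\<lambda>y. chebU m y * sqrt (1 - y\<^sup>2)"
  have "((\<lambda>x. sin x *\<^sub>R ?f (- cos x)) has_integral integral {- cos 0..- cos pi} ?f) {0..pi}"
  proof (rule has_integral_substitution[where c="-1" and d=1])
    show "(\<lambda>x. - cos x) ` {0..pi} \<subseteq> {- 1..1}" by auto
    show "continuous_on {- 1..1} ?f" by (intro continuous_intros cheb_cont)
    fix x show "((\<lambda>x. - cos x) has_real_derivative sin x) (at x within {0..pi})"
      by (auto intro!: derivative_eq_intros)
  qed auto
  hence h: "((\<lambda>x. sin x *\<^sub>R ?f (- cos x)) has_integral integral {-1..1} ?f) {0..pi}" by simp
  have "((\<lambda>x. sin x *\<^sub>R ?f (- cos x)) has_integral (-1)^m * 0) {0..pi}"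
  proof (rule has_integral_spike_finite[where S="{}", OF _ _ has_integral_mult_right[OF int_sinsin[OF assms]]])
    fix x assume x: "x \<in> {0..pi} - {}"
    have s: "sqrt (1 - (cos x)\<^sup>2) = sin x"
    proof -
      have "1 - (cos x)\<^sup>2 = (sin x)\<^sup>2" by (simp add: sin_squared_eq)
      moreover have "sin x \<ge> 0" using x by (auto intro: sin_ge_zero)
      ultimately show ?thesis by simp
    qed
    show "sin x *\<^sub>R ?f (- cos x) = (-1)^m * (sin ((real m + 1) * x) * sin x)"
    proof -
      have q: "(- cos x)\<^sup>2 = (cos x)\<^sup>2" by simp
      have "sin x *\<^sub>R ?f (- cos x) = (-1)^m * (chebU m (cos x) * sin x) * sin x"
        by (simp only: q s cheb_neg real_scaleR_def) (simp only: ac_simps)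
      also have "\<dots> = (-1)^m * (sin ((real m + 1) * x) * sin x)"
        by (simp only: cheb_sin)
      finally show ?thesis .
    qed
  qed simp
  from has_integral_unique[OF h this] show ?thesis by simp
qed

lemma w_integrable: "(\<lambda>y. y ^ k * chebU m y * sqrt (1 - y\<^sup>2)) integrable_on {-1..1}"
  by (rule integrable_continuous_interval) (intro continuous_intros cheb_cont)

lemma cheb_mom: "k < m \<Longrightarrow> integral {-1..1} (\<lambda>y. y ^ k * chebU m y * sqrt (1 - y\<^sup>2)) = 0"
proof (induction k arbitrary: m)
  case 0 then show ?case using cheb_base[of m] by simp
next
  case (Suc k)
  then obtain n where m: "m = Suc n" and n: "k < n" by (cases m) auto
  let ?g = "\<lambda>j y. y ^ k * chebU j y * sqrt (1 - y\<^sup>2)"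
  have i1: "(?g (Suc (Suc n)) has_integral 0) {-1..1}"
    using Suc.IH[of "Suc (Suc n)"] n w_integrable[of k "Suc (Suc n)"] by (metis has_integral_integral less_SucI)
  have i2: "(?g n has_integral 0) {-1..1}"
    using Suc.IH[of n] n w_integrable[of k n] by (metis has_integral_integral)
  have "((\<lambda>y. (1/2) * ?g (Suc (Suc n)) y + (1/2) * ?g n y) has_integral (1/2) * 0 + (1/2) * 0) {-1..1}"
    by (intro has_integral_add has_integral_mult_right i1 i2)
  moreover have "(\<lambda>y. (1/2) * ?g (Suc (Suc n)) y + (1/2) * ?g n y) = (\<lambda>y. y ^ Suc k * chebU m y * sqrt (1 - y\<^sup>2))"
    by (auto simp: m algebra_simps)
  ultimately show ?case by (simp add: integral_unique)
qed

lemma cheb_orth: assumes "degree p < m"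
  shows "integral {-1..1} (\<lambda>y. poly p y * chebU m y * sqrt (1 - y\<^sup>2)) = 0"
proof -
  have "((\<lambda>y. \<Sum>i\<le>degree p. coeff p i * (y ^ i * chebU m y * sqrt (1 - y\<^sup>2))) has_integral (\<Sum>i\<le>degree p. coeff p i * 0)) {-1..1}"
  proof (rule has_integral_sum, simp)
    fix i assume "i \<in> {..degree p}"
    hence "i < m" using assms by auto
    then show "((\<lambda>y. coeff p i * (y ^ i * chebU m y * sqrt (1 - y\<^sup>2))) has_integral coeff p i * 0) {-1..1}"
      using cheb_mom[of i m] w_integrable[of i m]
      by (intro has_integral_mult_right) (metis has_integral_integral)
  qed
  moreover have "(\<lambda>y. \<Sum>i\<le>degree p. coeff p i * (y ^ i * chebU m y * sqrt (1 - y\<^sup>2))) = (\<lambda>y. poly p y * chebU m y * sqrt (1 - y\<^sup>2))"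
    by (simp add: poly_altdef sum_distrib_right mult.assoc)
  ultimately show ?thesis by (simp add: integral_unique)
qed

lemma C_zero: "Ccoef g g g (3 * g + 2) = 0"
proof -
  obtain p where p: "degree p \<le> g" "\<forall>y. chebU g y = poly p y" using cheb_poly by blast
  have "degree (p * p * p) \<le> 3 * g"
    using degree_mult_le[of "p*p" p] degree_mult_le[of p p] p(1) by linarith
  hence "integral {-1..1} (\<lambda>y. poly (p*p*p) y * chebU (3*g+2) y * sqrt (1 - y\<^sup>2)) = 0"
    by (intro cheb_orth) linarith
  then show ?thesis unfolding Ccoef_def using p(2) by simp
qed

lemma C_nonneg: "Ccoef g g g g \<ge> 0"
proof -
  have "integral {-1..1} (\<lambda>y. chebU g y * chebU g y * chebU g y * chebU g y * sqrt (1 - y\<^sup>2)) \<ge> 0"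
  proof (rule integral_nonneg)
    show "(\<lambda>y. chebU g y * chebU g y * chebU g y * chebU g y * sqrt (1 - y\<^sup>2)) integrable_on {-1..1}"
      by (rule integrable_continuous_interval) (intro continuous_intros cheb_cont)
    fix y :: real assume "y \<in> {-1..1}"
    hence "1 - y\<^sup>2 \<ge> 0" by (simp add: abs_square_le_1 abs_le_iff)
    moreover have "chebU g y * chebU g y * chebU g y * chebU g y \<ge> 0" by (metis mult.assoc zero_le_square mult_nonneg_nonneg)
    ultimately show "0 \<le> chebU g y * chebU g y * chebU g y * chebU g y * sqrt (1 - y\<^sup>2)" by simp
  qed
  then show ?thesis unfolding Ccoef_def by simp
qed


lemma trig3: "cos (x::real) ^ 3 * cos y = 3/8 * (cos (x - y) + cos (x + y)) + 1/8 * (cos (3*x - y) + cos (3*x + y))"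
proof -
  have a: "cos (x - y) + cos (x + y) = 2 * cos x * cos y" by (simp add: cos_add cos_diff)
  have b: "cos (3*x - y) + cos (3*x + y) = 2 * cos (3*x) * cos y" by (simp add: cos_add cos_diff)
  show ?thesis unfolding a b cos_treble_cos by (simp add: algebra_simps power3_eq_cube)
qed

lemma omega_Ints: "omega n \<in> \<int>" unfolding omega_def by (metis Ints_1 Ints_add Ints_of_nat)

lemma time_int: "((\<lambda>t. cos (omega g * t) ^ 3 * cos (omega m * t)) has_integral
   (3/8 * ((if m = g then 2*pi else 0) + 0) + 1/8 * ((if m = 3 * g + 2 then 2*pi else 0) + 0))) {0..2*pi}"
proof -
  have i: "((\<lambda>t. cos (c * t)) has_integral (if c = 0 then 2 * pi else 0)) {0..2*pi}"
    if "c \<in> {omega g - omega m, omega g + omega m, 3 * omega g - omega m, 3 * omega g + omega m}" for c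
    using that omega_Ints by (intro int_cos) auto
  have c1: "(omega g - omega m = 0) = (m = g)" by (auto simp: omega_def)
  have c2: "(omega g + omega m = 0) = False" by (auto simp: omega_def)
  have c3: "(3 * omega g - omega m = 0) = (m = 3 * g + 2)" by (auto simp: omega_def)
  have c4: "(3 * omega g + omega m = 0) = False" by (auto simp: omega_def)
  have "((\<lambda>t. 3/8 * (cos ((omega g - omega m) * t) + cos ((omega g + omega m) * t)) + 1/8 * (cos ((3 * omega g - omega m) * t) + cos ((3 * omega g + omega m) * t))) has_integral
     (3/8 * ((if m = g then 2*pi else 0) + 0) + 1/8 * ((if m = 3 * g + 2 then 2*pi else 0) + 0))) {0..2*pi}"
    using i[of "omega g - omega m"] i[of "omega g + omega m"] i[of "3 * omega g - omega m"] i[of "3 * omega g + omega m"]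
    unfolding c1 c2 c3 c4 by (intro has_integral_add has_integral_mult_right) auto
  moreover have "(\<lambda>t. 3/8 * (cos ((omega g - omega m) * t) + cos ((omega g + omega m) * t)) + 1/8 * (cos ((3 * omega g - omega m) * t) + cos ((3 * omega g + omega m) * t)))
    = (\<lambda>t. cos (omega g * t) ^ 3 * cos (omega m * t))"
  proof
    fix t
    show "3/8 * (cos ((omega g - omega m) * t) + cos ((omega g + omega m) * t)) + 1/8 * (cos ((3 * omega g - omega m) * t) + cos ((3 * omega g + omega m) * t))
      = cos (omega g * t) ^ 3 * cos (omega m * t)"
      using trig3[of "omega g * t" "omega m * t"] by (simp add: left_diff_distrib distrib_right mult.assoc)
  qed
  ultimately show ?thesis by simp
qed

lemma fnl_single: "fnl (\<lambda>n. if n = g then c else 0) m = - (Ccoef g g g m * c ^ 3)"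
proof -
  have "(\<Sum>\<^sub>\<infinity>(i, j, k)\<in>UNIV. Ccoef i j k m * (if i = g then c else 0) * (if j = g then c else 0) * (if k = g then c else 0))
      = (\<Sum>\<^sub>\<infinity>x\<in>{(g,g,g)}. Ccoef g g g m * c ^ 3)"
    by (rule infsum_cong_neutral) (auto simp: power3_eq_cube mult.assoc split: if_splits)
  then show ?thesis unfolding fnl_def by simp
qed

theorem lemma6p1:
  fixes \<gamma> :: nat and K :: real
  assumes "K = 2 * omega \<gamma> * sqrt (2 / (3 * Ccoef \<gamma> \<gamma> \<gamma> \<gamma>))
         \<or> K = - (2 * omega \<gamma> * sqrt (2 / (3 * Ccoef \<gamma> \<gamma> \<gamma> \<gamma>)))"
  shows "Mop (\<lambda>m. if m = \<gamma> then K else 0) = (\<lambda>m. 0)"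
proof
  fix m
  let ?\<xi> = "\<lambda>m. if m = \<gamma> then K else 0"
  have P: "Phi t ?\<xi> = (\<lambda>n. if n = \<gamma> then K * cos (omega \<gamma> * t) else 0)" for t
    unfolding Phi_def by auto
  have "(\<lambda>t. Phi t (fnl (Phi t ?\<xi>)) m) = (\<lambda>t. (- (Ccoef \<gamma> \<gamma> \<gamma> m * K ^ 3)) * (cos (omega \<gamma> * t) ^ 3 * cos (omega m * t)))"
    unfolding P by (auto simp: Phi_def fnl_single power_mult_distrib)
  hence fa: "favg ?\<xi> m = 1 / (2 * pi) * ((- (Ccoef \<gamma> \<gamma> \<gamma> m * K ^ 3)) *
     (3/8 * ((if m = \<gamma> then 2*pi else 0) + 0) + 1/8 * ((if m = 3 * \<gamma> + 2 then 2*pi else 0) + 0)))"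
    unfolding favg_def using integral_unique[OF has_integral_mult_right[OF time_int[of \<gamma> m]]] by simp
  show "Mop ?\<xi> m = 0"
  proof (cases "m = \<gamma>")
    case True
    let ?C = "Ccoef \<gamma> \<gamma> \<gamma> \<gamma>"
    have C0: "?C \<ge> 0" by (rule C_nonneg)
    have K2: "K^2 = 4 * (omega \<gamma>)^2 * (2 / (3 * ?C))"
      using assms C0 by (auto simp: power_mult_distrib)
    have "Mop ?\<xi> m = (omega \<gamma>)^2 * K - 3/8 * ?C * K^3"
      unfolding Mop_def Aop_def fa using True by (simp add: field_simps)
    also have "\<dots> = K * ((omega \<gamma>)^2 - 3/8 * ?C * K^2)" by (simp add: algebra_simps power3_eq_cube power2_eq_square)
    also have "\<dots> = 0"
    proof (cases "?C = 0")
      case True then show ?thesis using K2 by simp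
    next
      case False then show ?thesis unfolding K2 by (simp add: field_simps)
    qed
    finally show ?thesis .
  next
    case False
    then show ?thesis unfolding Mop_def Aop_def fa using C_zero[of \<gamma>] by auto
  qed
qed

end
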